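(* Let $n \ge 3$ be an integer. For a binary string $y$ let $r_y$ be its number of runs, $u_y$ its number of runs of length one, and $b_y$ the number of runs of length one occurring at the start or end of $y$. Define \[ f'(r,u,b) = \begin{cases} \frac{1}{r}\left(1 - \frac{u-b}{r^2}\right) & \text{if } u-b \ge 2,\\ \frac{1}{r} & \text{if } u-b \le 1,\end{cases} \] and let $z \in \mathbb{R}^{[2]^{n-1}}$ be given by $z_y = f'(r_y,u_y,b_y)$. Then \[ \sum_{y \in [2]^{n-1}} z_y \ \ge\ \frac{2^n - 2}{n+1}\left(1 + \frac{1}{n-1} - \frac{3}{(n-1)(n-2)}\right). \]
   Context: $[2]=\{0,1\}$ and $[2]^m$ is the set of binary strings of length $m$. A run of a string is a maximal block of consecutive equal symbols. *)

theory Defs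
  imports Complex_Main
begin

fun runs :: "'a list \<Rightarrow> nat list" where
  "runs [] = []"
| "runs (x # xs) = (let k = length (takeWhile (\<lambda>y. y = x) xs)
                    in Suc k # runs (drop k xs))"

definition num_runs :: "'a list \<Rightarrow> nat" where
  "num_runs y = length (runs y)"

definition num_unit_runs :: "'a list \<Rightarrow> nat" where
  "num_unit_runs y = length (filter (\<lambda>l. l = 1) (runs y))"

(* number of runs of length one occurring at the start or at the end of y
   (a run that is both first and last is counted once) *)
definition num_end_unit_runs :: "'a list \<Rightarrow> nat" where
  "num_end_unit_runs y =
     card {i. i < length (runs y) \<and> (i = 0 \<or> i = length (runs y) - 1) \<and> runs y ! i = 1}"

definition f' :: "nat \<Rightarrow> nat \<Rightarrow> nat \<Rightarrow> real" where
  "f' r u b = (if int u - int b \<ge> 2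
               then (1 / real r) * (1 - (real u - real b) / (real r)^2)
               else 1 / real r)"

definition z :: "bool list \<Rightarrow> real" where
  "z y = f' (num_runs y) (num_unit_runs y) (num_end_unit_runs y)"

end

theory Submission
  imports Defs
begin


definition Dset :: "bool list \<Rightarrow> nat set" where
  "Dset y = {i. Suc i < length y \<and> y!i \<noteq> y!Suc i}"

definition Pc :: "nat set \<Rightarrow> nat" where
  "Pc S = card {i\<in>S. Suc i \<in> S}"

definition Ic :: "nat list \<Rightarrow> nat" where
  "Ic R = length (filter (\<lambda>l. l = 1) (butlast (tl R)))"

lemma runs_Cons_Cons:
  "runs (x # y # ys) = (if x = y then (case runs (y # ys) of a # R \<Rightarrow> Suc a # R | [] \<Rightarrow> []) else 1 # runs (y # ys))"
  by (simp add: Let_def)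

lemma runs_Cons_shape: "\<exists>k R. runs (x # ys) = Suc k # R"
  by (simp add: Let_def)

lemma runs_single: "runs [x] = [1]" by simp

declare runs.simps(2)[simp del]

lemma Dset_Cons:
  assumes "ys \<noteq> []"
  shows "Dset (x # ys) = (if x \<noteq> hd ys then insert 0 (Suc ` Dset ys) else Suc ` Dset ys)"
proof -
  have "i \<in> Dset (x # ys) \<longleftrightarrow> i \<in> (if x \<noteq> hd ys then insert 0 (Suc ` Dset ys) else Suc ` Dset ys)" for i
  proof (cases i)
    case 0 then show ?thesis using assms by (cases ys) (auto simp: Dset_def)
  next
    case (Suc j) then show ?thesis by (auto simp: Dset_def)
  qed
  then show ?thesis by blast
qed

lemma Dset_finite: "finite (Dset y)"
  by (rule finite_subset[of _ "{..<length y}"]) (auto simp: Dset_def)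

lemma Dset_single: "Dset [x] = {}" by (simp add: Dset_def)

lemma L1: "y \<noteq> [] \<Longrightarrow> length (runs y) = Suc (card (Dset y))"
proof (induction y)
  case Nil then show ?case by simp
next
  case (Cons x ys)
  show ?case
  proof (cases ys)
    case Nil then show ?thesis by (simp add: Dset_single runs_single)
  next
    case (Cons y0 ys')
    obtain k R where kr: "runs ys = Suc k # R" using runs_Cons_shape[of y0 ys'] Cons by blast
    have IH: "length (runs ys) = Suc (card (Dset ys))" using Cons.IH Cons by simp
    have ci: "card (Suc ` Dset ys) = card (Dset ys)" by (simp add: card_image)
    have "0 \<notin> Suc ` Dset ys" by auto
    then have ci2: "card (insert 0 (Suc ` Dset ys)) = Suc (card (Dset ys))"
      using ci Dset_finite by simp
    show ?thesis using IH kr ci ci2 Cons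
      by (auto simp: Dset_Cons runs_Cons_Cons)
  qed
qed

lemma L0: assumes "ys \<noteq> []" shows "(hd (runs ys) = 1 \<and> tl (runs ys) \<noteq> []) \<longleftrightarrow> 0 \<in> Dset ys"
proof (cases ys)
  case Nil then show ?thesis using assms by simp
next
  case (Cons y0 ys')
  show ?thesis
  proof (cases ys')
    case Nil then show ?thesis using Cons by (simp add: Dset_single runs_single)
  next
    case (Cons y1 ys'')
    obtain k R where kr: "runs (y1 # ys'') = Suc k # R" using runs_Cons_shape[of y1 ys''] by blast
    show ?thesis using \<open>ys = y0 # ys'\<close> Cons kr
      by (auto simp: runs_Cons_Cons Dset_def)
  qed
qed

lemma Pc_Suc: "Pc (Suc ` S) = Pc S"
proof -
  have "{i\<in>Suc ` S. Suc i \<in> Suc ` S} = Suc ` {i\<in>S. Suc i \<in> S}" by auto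
  then show ?thesis by (simp add: Pc_def card_image)
qed

lemma Pc_ins: "finite S \<Longrightarrow> Pc (insert 0 (Suc ` S)) = Pc S + (if 0 \<in> S then 1 else 0)"
proof -
  assume f: "finite S"
  have e: "{i\<in>insert 0 (Suc ` S). Suc i \<in> insert 0 (Suc ` S)} =
        (if 0 \<in> S then {0} else {}) \<union> Suc ` {i\<in>S. Suc i \<in> S}" by auto
  have "finite {i\<in>S. Suc i \<in> S}" using f by simp
  then show ?thesis unfolding Pc_def e by (auto simp: card_image)
qed

lemma butlast_Cons2: "butlast (a # R) = (if R = [] then [] else a # butlast R)" by simp

lemma L2: "y \<noteq> [] \<Longrightarrow> Ic (runs y) = Pc (Dset y)"
proof (induction y)
  case Nil then show ?case by simp
next
  case (Cons x ys)
  show ?case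
  proof (cases ys)
    case Nil then show ?thesis by (simp add: Dset_single Ic_def Pc_def runs_single)
  next
    case (Cons y0 ys')
    obtain k R where kr: "runs ys = Suc k # R" using runs_Cons_shape[of y0 ys'] Cons by blast
    have IH: "Ic (runs ys) = Pc (Dset ys)" using Cons.IH Cons by simp
    have l0: "(Suc k = 1 \<and> R \<noteq> []) \<longleftrightarrow> 0 \<in> Dset ys" using L0[of ys] kr Cons by simp
    show ?thesis
    proof (cases "x = y0")
      case True
      then have "runs (x # ys) = Suc (Suc k) # R" using kr Cons by (simp add: runs_Cons_Cons)
      then show ?thesis using IH kr Cons True by (simp add: Dset_Cons Pc_Suc Ic_def)
    next
      case False
      then have "runs (x # ys) = 1 # Suc k # R" using kr Cons by (simp add: runs_Cons_Cons)
      then show ?thesis using IH kr Cons False l0 Dset_finite[of ys]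
        by (auto simp: Dset_Cons Pc_ins Ic_def)
    qed
  qed
qed

lemma L3:
  assumes "R \<noteq> []"
  shows "real (length (filter (\<lambda>l. l = 1) R)) -
     real (card {i. i < length R \<and> (i = 0 \<or> i = length R - 1) \<and> R ! i = 1}) = real (Ic R)"
proof -
  obtain a S where R: "R = a # S" using assms by (cases R) auto
  show ?thesis
  proof (cases S rule: rev_cases)
    case Nil
    have "{i. i < length R \<and> (i = 0 \<or> i = length R - 1) \<and> R ! i = 1} = (if a = 1 then {0} else {})"
      using R Nil by auto
    then show ?thesis using R Nil by (simp add: Ic_def)
  next
    case (snoc S' l)
    let ?L = "length S'"
    have e1: "{i. i < length R \<and> (i = 0 \<or> i = length R - 1) \<and> R ! i = 1} =
       {i \<in> {0, Suc ?L}. R ! i = 1}"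
      using R snoc by auto
    have "{i \<in> {0, Suc ?L}. R ! i = 1} =
       (if a = 1 then {0} else {}) \<union> (if l = 1 then {Suc ?L} else {})"
    proof -
      have h1: "R ! 0 = a" and h2: "R ! Suc ?L = l" using R snoc by (auto simp: nth_append)
      show ?thesis
      proof (rule set_eqI)
        fix i show "i \<in> {i \<in> {0, Suc ?L}. R ! i = 1} \<longleftrightarrow>
             i \<in> (if a = 1 then {0} else {}) \<union> (if l = 1 then {Suc ?L} else {})"
          using h1 h2 by (cases "i = 0"; cases "i = Suc ?L") auto
      qed
    qed
    note e1[unfolded this]
    then show ?thesis using R snoc by (simp add: Ic_def)
  qed
qed



lemma G:
  fixes h :: "nat \<Rightarrow> real"
  assumes "finite A"
  shows "(\<Sum>D\<in>Pow A. h (card D)) = (\<Sum>j\<le>card A. real (card A choose j) * h j)"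
proof -
  have "(\<Sum>D\<in>Pow A. h (card D)) = (\<Sum>D\<in>Pow A. \<Sum>j\<le>card A. if card D = j then h j else 0)"
  proof (rule sum.cong)
    fix D assume "D \<in> Pow A"
    then have "card D \<le> card A" using assms by (simp add: card_mono)
    then show "h (card D) = (\<Sum>j\<le>card A. if card D = j then h j else 0)"
      by (simp add: sum.delta)
  qed simp
  also have "\<dots> = (\<Sum>j\<le>card A. \<Sum>D\<in>Pow A. if card D = j then h j else 0)"
    by (rule sum.swap)
  also have "\<dots> = (\<Sum>j\<le>card A. real (card A choose j) * h j)"
  proof (rule sum.cong)
    fix j assume "j \<in> {..card A}"
    have se: "{D\<in>Pow A. card D = j} = {B. B \<subseteq> A \<and> card B = j}" by auto
    have "(\<Sum>D\<in>Pow A. if card D = j then h j else 0) = (\<Sum>D\<in>{D\<in>Pow A. card D = j}. h j)"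
      by (rule sum.inter_filter[symmetric]) (simp add: assms)
    also have "\<dots> = real (card {B. B \<subseteq> A \<and> card B = j}) * h j" by (simp add: se)
    also have "\<dots> = real (card A choose j) * h j" using n_subsets[OF assms, of j] by simp
    finally show "(\<Sum>D\<in>Pow A. if card D = j then h j else 0) = real (card A choose j) * h j" .
  qed simp
  finally show ?thesis .
qed

lemma B1: "(\<Sum>j\<le>k. real (k choose j) / (real j + 1)) = (2 ^ (k+1) - 1) / (real k + 1)"
proof -
  have e: "real (k choose j) / (real j + 1) = real (Suc k choose Suc j) / (real k + 1)" for j
  proof -
    have "real (Suc j) * real (Suc k choose Suc j) = real (Suc k) * real (k choose j)"
      using Suc_times_binomial[of j k] by (metis of_nat_mult)
    then show ?thesis by (simp add: field_simps)
  qed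
  have s: "(\<Sum>j\<le>k. (Suc k choose Suc j)) = 2 ^ (k+1) - 1"
    using choose_row_sum[of "Suc k"] sum.atMost_Suc_shift[of "\<lambda>i. Suc k choose i" k] by simp
  have "(\<Sum>j\<le>k. real (k choose j) / (real j + 1)) = (\<Sum>j\<le>k. real (Suc k choose Suc j)) / (real k + 1)"
    by (simp add: e sum_divide_distrib)
  also have "(\<Sum>j\<le>k. real (Suc k choose Suc j)) = 2 ^ (k+1) - 1"
  proof -
    have "(\<Sum>j\<le>k. real (Suc k choose Suc j)) = real (\<Sum>j\<le>k. (Suc k choose Suc j))" by simp
    also have "\<dots> = real (2 ^ (k+1) - 1)" using s by simp
    also have "\<dots> = 2 ^ (k+1) - 1" by (simp add: of_nat_diff)
    finally show ?thesis .
  qed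
  finally show ?thesis .
qed

lemma shift3: "(\<Sum>i\<le>Suc (Suc (Suc p)). (f i::nat)) = f 0 + f 1 + f 2 + (\<Sum>j\<le>p. f (j + 3))"
  by (simp del: sum.atMost_Suc add: sum.atMost_Suc_shift numeral_3_eq_3 numeral_2_eq_2)

lemma B2: "(\<Sum>j\<le>p. real (p choose j) / ((real j + 1) * (real j + 2) * (real j + 3)))
    \<le> (2 ^ (p+3) - 1) / ((real p + 1) * (real p + 2) * (real p + 3))"
proof -
  have e: "real (p choose j) / ((real j + 1) * (real j + 2) * (real j + 3)) =
      real (p + 3 choose (j + 3)) / ((real p + 1) * (real p + 2) * (real p + 3))" for j
  proof -
    have n: "Suc j * Suc (Suc j) * Suc (Suc (Suc j)) * (Suc (Suc (Suc p)) choose Suc (Suc (Suc j)))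
        = Suc p * Suc (Suc p) * Suc (Suc (Suc p)) * (p choose j)"
      using Suc_times_binomial[of j p] Suc_times_binomial[of "Suc j" "Suc p"]
        Suc_times_binomial[of "Suc (Suc j)" "Suc (Suc p)"]
      by (metis mult.commute mult.left_commute)
    have H: "(real j + 1) * (real j + 2) * (real j + 3) * real (p + 3 choose (j + 3)) =
          (real p + 1) * (real p + 2) * (real p + 3) * real (p choose j)"
      using arg_cong[OF n, of real] by (simp add: numeral_3_eq_3 algebra_simps)
    have a: "(real j + 1) * (real j + 2) * (real j + 3) \<noteq> 0" by (simp add: add_nonneg_eq_0_iff)
    have b: "(real p + 1) * (real p + 2) * (real p + 3) \<noteq> 0" by (simp add: add_nonneg_eq_0_iff)
    show ?thesis using H by (simp only: frac_eq_eq[OF a b]) (simp add: mult.commute)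
  qed
  have s: "(\<Sum>j\<le>p. (p + 3 choose (j + 3))) \<le> 2 ^ (p+3) - 1"
  proof -
    have "2 ^ (p+3) = (\<Sum>i\<le>Suc (Suc (Suc p)). (p + 3 choose i))"
      using choose_row_sum[of "p+3"] by (simp add: numeral_3_eq_3)
    also have "\<dots> = 1 + (p+3) + (p + 3 choose 2) + (\<Sum>j\<le>p. (p + 3 choose (j + 3)))"
      using shift3[of "\<lambda>i. p + 3 choose i" p] by simp
    finally show ?thesis by linarith
  qed
  have "(\<Sum>j\<le>p. real (p choose j) / ((real j + 1) * (real j + 2) * (real j + 3))) =
     (\<Sum>j\<le>p. real (p + 3 choose (j + 3))) / ((real p + 1) * (real p + 2) * (real p + 3))"
    by (simp add: e sum_divide_distrib)
  also have "\<dots> \<le> (2 ^ (p+3) - 1) / ((real p + 1) * (real p + 2) * (real p + 3))"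
  proof (rule divide_right_mono)
    have "(\<Sum>j\<le>p. real (p + 3 choose (j + 3))) = real (\<Sum>j\<le>p. (p + 3 choose (j + 3)))" by simp
    also have "\<dots> \<le> real (2 ^ (p+3) - 1)" using s by linarith
    also have "\<dots> = 2 ^ (p+3) - 1" by (simp add: of_nat_diff)
    finally show "(\<Sum>j\<le>p. real (p + 3 choose (j + 3))) \<le> 2 ^ (p+3) - 1" .
  qed simp
  finally show ?thesis .
qed



lemma nth_Suc_Dset: "Suc i < length y \<Longrightarrow> y ! Suc i = (if i \<in> Dset y then \<not> y ! i else y ! i)"
  by (auto simp: Dset_def)

lemma inj_phi: "inj_on (\<lambda>y. (hd y, Dset y)) {y. length y = m}"
proof (rule inj_onI)
  fix y y' assume y: "y \<in> {y. length y = m}" and y': "y' \<in> {y. length y = m}"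
    and e: "(hd y, Dset y) = (hd y', Dset y')"
  have "\<forall>i. i < m \<longrightarrow> y ! i = y' ! i"
  proof
    fix i show "i < m \<longrightarrow> y ! i = y' ! i"
    proof (induction i)
      case 0 show ?case
      proof
        assume "0 < m"
        then have "y \<noteq> []" "y' \<noteq> []" using y y' by auto
        then show "y ! 0 = y' ! 0" using e by (simp add: hd_conv_nth[symmetric])
      qed
    next
      case (Suc i)
      show ?case using Suc y y' e nth_Suc_Dset[of i y] nth_Suc_Dset[of i y'] by auto
    qed
  qed
  then show "y = y'" using y y' by (auto intro: nth_equalityI)
qed

lemma card_lists: "card {y :: bool list. length y = m} = 2 ^ m"
  using card_lists_length_eq[of "UNIV :: bool set" m] by simp

lemma bij_phi:
  assumes "m \<ge> 1"
  shows "bij_betw (\<lambda>y. (hd y, Dset y)) {y :: bool list. length y = m} (UNIV \<times> Pow {..<m-1})"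
proof -
  let ?T = "UNIV \<times> Pow {..<m-1} :: (bool \<times> nat set) set"
  have sub: "(\<lambda>y. (hd y, Dset y)) ` {y. length y = m} \<subseteq> ?T"
    by (auto simp: Dset_def)
  have c1: "card ((\<lambda>y. (hd y, Dset y)) ` {y :: bool list. length y = m}) = 2 ^ m"
    using card_image[OF inj_phi] card_lists by simp
  have c2: "card ?T = 2 ^ m"
    using assms by (simp add: card_cartesian_product card_Pow power_Suc[symmetric])
  have "(\<lambda>y. (hd y, Dset y)) ` {y. length y = m} = ?T"
    using card_subset_eq[OF _ sub] c1 c2 by simp
  then show ?thesis using inj_phi by (simp add: bij_betw_def)
qed

lemma sum_phi:
  fixes g :: "nat set \<Rightarrow> real"
  assumes "m \<ge> 1"
  shows "(\<Sum>y\<in>{y :: bool list. length y = m}. g (Dset y)) = 2 * (\<Sum>S\<in>Pow {..<m-1}. g S)"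
proof -
  have "(\<Sum>y\<in>{y :: bool list. length y = m}. g (Dset y)) =
        (\<Sum>y\<in>{y :: bool list. length y = m}. (g \<circ> snd) (hd y, Dset y))" by simp
  also have "\<dots> = (\<Sum>p\<in>(UNIV::bool set) \<times> Pow {..<m-1}. (g \<circ> snd) p)"
    using sum.reindex_bij_betw[OF bij_phi[OF assms], of "g \<circ> snd"] by simp
  also have "\<dots> = 2 * (\<Sum>S\<in>Pow {..<m-1}. g S)"
    by (simp add: sum.cartesian_product' UNIV_bool)
  finally show ?thesis .
qed

lemma S1: "(\<Sum>S\<in>Pow {..<k}. 1 / (real (card S) + 1)) = (2 ^ (k+1) - 1) / (real k + 1)"
  using G[of "{..<k}" "\<lambda>j. 1 / (real j + 1)"] B1[of k] by simp

lemma Pc_sum: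
  assumes "S \<subseteq> {..<k}"
  shows "real (Pc S) = (\<Sum>i<k-1. if i \<in> S \<and> Suc i \<in> S then 1 else 0)"
proof -
  have e: "{i\<in>S. Suc i \<in> S} = {i\<in>{..<k-1}. i \<in> S \<and> Suc i \<in> S}" using assms by auto
  have "(\<Sum>i<k-1. if i \<in> S \<and> Suc i \<in> S then 1 else 0) = (\<Sum>i\<in>{i\<in>{..<k-1}. i \<in> S \<and> Suc i \<in> S}. (1::real))"
    by (rule sum.inter_filter[symmetric]) simp
  then show ?thesis by (simp add: Pc_def e)
qed

lemma inner:
  assumes "i < k - 1"
  shows "(\<Sum>S\<in>{S\<in>Pow {..<k}. i \<in> S \<and> Suc i \<in> S}. 1 / (real (card S) + 1) ^ 3)
     \<le> (2 ^ (k+1) - 1) / ((real k - 1) * real k * (real k + 1))"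
proof -
  let ?K = "{..<k} - {i, Suc i}"
  have fK: "finite ?K" by simp
  have cK: "card ?K = k - 2" using assms by (simp add: card_Diff_subset)
  have img: "{S\<in>Pow {..<k}. i \<in> S \<and> Suc i \<in> S} = (\<lambda>E. E \<union> {i, Suc i}) ` Pow ?K"
  proof (rule set_eqI)
    fix S show "S \<in> {S\<in>Pow {..<k}. i \<in> S \<and> Suc i \<in> S} \<longleftrightarrow> S \<in> (\<lambda>E. E \<union> {i, Suc i}) ` Pow ?K"
    proof
      assume h: "S \<in> {S\<in>Pow {..<k}. i \<in> S \<and> Suc i \<in> S}"
      then have "S = (S - {i, Suc i}) \<union> {i, Suc i}" by auto
      moreover have "S - {i, Suc i} \<in> Pow ?K" using h by auto
      ultimately show "S \<in> (\<lambda>E. E \<union> {i, Suc i}) ` Pow ?K" by blast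
    next
      assume "S \<in> (\<lambda>E. E \<union> {i, Suc i}) ` Pow ?K"
      then show "S \<in> {S\<in>Pow {..<k}. i \<in> S \<and> Suc i \<in> S}" using assms by auto
    qed
  qed
  have inj: "inj_on (\<lambda>E. E \<union> {i, Suc i}) (Pow ?K)"
    by (rule inj_onI) blast
  have ce: "card (E \<union> {i, Suc i}) = card E + 2" if "E \<in> Pow ?K" for E
  proof -
    have "finite E" using that finite_subset[OF _ fK] by auto
    moreover have "E \<inter> {i, Suc i} = {}" using that by auto
    ultimately show ?thesis by (simp add: card_Un_disjoint)
  qed
  have "(\<Sum>S\<in>{S\<in>Pow {..<k}. i \<in> S \<and> Suc i \<in> S}. 1 / (real (card S) + 1) ^ 3)
      = (\<Sum>E\<in>Pow ?K. 1 / (real (card (E \<union> {i, Suc i})) + 1) ^ 3)"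
    unfolding img by (rule sum.reindex[OF inj, unfolded comp_def])
  also have "\<dots> = (\<Sum>E\<in>Pow ?K. 1 / (real (card E) + 3) ^ 3)"
  proof (rule sum.cong[OF refl])
    fix E assume "E \<in> Pow ?K"
    then show "1 / (real (card (E \<union> {i, Suc i})) + 1) ^ 3 = 1 / (real (card E) + 3) ^ 3"
      using ce[of E] by (simp add: add.commute)
  qed
  also have "\<dots> = (\<Sum>j\<le>k-2. real (k-2 choose j) * (1 / (real j + 3) ^ 3))"
    using G[OF fK, of "\<lambda>j. 1 / (real j + 3) ^ 3"] cK by simp
  also have "\<dots> \<le> (\<Sum>j\<le>k-2. real (k-2 choose j) / ((real j + 1) * (real j + 2) * (real j + 3)))"
  proof (rule sum_mono)
    fix j :: nat
    have "(real j + 1) * (real j + 2) * (real j + 3) \<le> (real j + 3) ^ 3"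
      by (simp add: power3_eq_cube mult_mono)
    then have "1 / (real j + 3) ^ 3 \<le> 1 / ((real j + 1) * (real j + 2) * (real j + 3))"
      by (intro divide_left_mono) auto
    then show "real (k-2 choose j) * (1 / (real j + 3) ^ 3) \<le> real (k-2 choose j) / ((real j + 1) * (real j + 2) * (real j + 3))"
      using mult_left_mono[of _ _ "real (k-2 choose j)"] by fastforce
  qed
  also have "\<dots> \<le> (2 ^ (k-2+3) - 1) / ((real (k-2) + 1) * (real (k-2) + 2) * (real (k-2) + 3))"
    by (rule B2)
  also have "\<dots> = (2 ^ (k+1) - 1) / ((real k - 1) * real k * (real k + 1))"
  proof -
    have "k - 2 + 3 = k + 1" "real (k-2) = real k - 2" using assms by (auto simp: of_nat_diff)
    then show ?thesis by (simp add: algebra_simps)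
  qed
  finally show ?thesis .
qed

lemma cancel1: "(c::real) > 0 \<Longrightarrow> c * (A / (c * y)) = A / y"
  by (cases "y = 0") (simp_all add: field_simps)

lemma cancel2: "(c::real) \<noteq> 0 \<Longrightarrow> d \<noteq> 0 \<Longrightarrow> B/c*(c*E/d) = B*E/d"
  by (simp add: field_simps)

lemma alg3: "(x::real) > 0 \<Longrightarrow> (2*A)/(x+3) * (1 + 1/(x+1) - 3/((x+1)*x)) = 2*(A/(x+1) - A/(x*(x+1)))"
proof -
  assume x: "x > 0"
  define d where "d = (x+1)*x"
  have dp: "d \<noteq> 0" using x by (simp add: d_def)
  have i1: "1/(x+1) = x/d" using x by (simp add: d_def)
  have i2: "x*(x+1) = d" by (simp add: d_def mult.commute)
  have i3: "d + x - 3 = (x+3)*(x-1)" by (simp add: d_def algebra_simps)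
  have "(2*A)/(x+3) * (1 + 1/(x+1) - 3/((x+1)*x)) = (2*A)/(x+3) * ((d + x - 3)/d)"
  proof -
    have "1 + x/d - 3/d = (d + x - 3)/d" using dp by (simp add: field_simps)
    then show ?thesis unfolding i1 d_def[symmetric] by simp
  qed
  also have "\<dots> = 2*A*(x-1)/d" unfolding i3 using x dp by (simp add: cancel2)
  also have "\<dots> = 2*(A*x/d - A/d)" using dp by (simp add: field_simps)
  also have "\<dots> = 2*(A/(x+1) - A/(x*(x+1)))"
  proof -
    have "A/(x+1) = A * (1/(x+1))" by simp
    also have "\<dots> = A*x/d" unfolding i1 by simp
    finally show ?thesis unfolding i2 by simp
  qed
  finally show ?thesis .
qed

lemma S2:
  assumes "k \<ge> 1"
  shows "(\<Sum>S\<in>Pow {..<k}. real (Pc S) / (real (card S) + 1) ^ 3) \<le> (2 ^ (k+1) - 1) / (real k * (real k + 1))"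
proof -
  have "(\<Sum>S\<in>Pow {..<k}. real (Pc S) / (real (card S) + 1) ^ 3) =
        (\<Sum>S\<in>Pow {..<k}. \<Sum>i<k-1. if i \<in> S \<and> Suc i \<in> S then 1 / (real (card S) + 1) ^ 3 else 0)"
    by (auto simp: Pc_sum sum_divide_distrib intro!: sum.cong)
  also have "\<dots> = (\<Sum>i<k-1. \<Sum>S\<in>Pow {..<k}. if i \<in> S \<and> Suc i \<in> S then 1 / (real (card S) + 1) ^ 3 else 0)"
    by (rule sum.swap)
  also have "\<dots> = (\<Sum>i<k-1. \<Sum>S\<in>{S\<in>Pow {..<k}. i \<in> S \<and> Suc i \<in> S}. 1 / (real (card S) + 1) ^ 3)"
    by (rule sum.cong[OF refl]) (rule sum.inter_filter[symmetric], simp)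
  also have "\<dots> \<le> (\<Sum>i<k-1. (2 ^ (k+1) - 1) / ((real k - 1) * real k * (real k + 1)))"
    by (rule sum_mono) (rule inner, simp)
  also have "\<dots> \<le> (2 ^ (k+1) - 1) / (real k * (real k + 1))"
  proof (cases "k = 1")
    case True then show ?thesis by simp
  next
    case False
    then have k2: "real k - 1 > 0" using assms by simp
    have "(\<Sum>i<k-1. (2 ^ (k+1) - 1) / ((real k - 1) * real k * (real k + 1)))
        = (real k - 1) * ((2 ^ (k+1) - 1) / ((real k - 1) * real k * (real k + 1)))"
      using assms by (simp add: of_nat_diff)
    also have "\<dots> = (2 ^ (k+1) - 1) / (real k * (real k + 1))"
    proof -
      define A :: real where "A = 2 ^ (k+1) - 1"
      have "(real k - 1) * (A / ((real k - 1) * (real k * (real k + 1)))) = A / (real k * (real k + 1))"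
        using k2 by (rule cancel1)
      then have "(real k - 1) * (A / ((real k - 1) * real k * (real k + 1))) = A / (real k * (real k + 1))"
        by (simp add: mult.assoc)
      then show ?thesis by (simp add: A_def)
    qed
    finally show ?thesis by simp
  qed
  finally show ?thesis .
qed

lemma alg: "(r::real) > 0 \<Longrightarrow> (1 / r) * (1 - P / r ^ 2) = 1 / r - P / r ^ 3"
  by (simp add: field_simps power3_eq_cube power2_eq_square)

lemma z_ge:
  assumes "y \<noteq> []"
  shows "z y \<ge> 1 / (real (card (Dset y)) + 1) - real (Pc (Dset y)) / (real (card (Dset y)) + 1) ^ 3"
proof -
  have r: "num_runs y = Suc (card (Dset y))" using L1[OF assms] by (simp add: num_runs_def)
  have rn: "runs y \<noteq> []" using L1[OF assms] by auto
  have ub: "real (num_unit_runs y) - real (num_end_unit_runs y) = real (Pc (Dset y))"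
    using L3[OF rn] L2[OF assms] by (simp add: num_unit_runs_def num_end_unit_runs_def)
  let ?r = "real (card (Dset y)) + 1"
  have rp: "?r > 0" by simp
  show ?thesis
  proof (cases "int (num_unit_runs y) - int (num_end_unit_runs y) \<ge> 2")
    case True
    then have "z y = (1 / ?r) * (1 - real (Pc (Dset y)) / ?r ^ 2)"
      by (simp add: z_def f'_def r ub add.commute)
    also have "\<dots> = 1 / ?r - real (Pc (Dset y)) / ?r ^ 3" using rp by (rule alg)
    finally show ?thesis by simp
  next
    case False
    then have "z y = 1 / ?r" by (simp add: z_def f'_def r)
    moreover have "real (Pc (Dset y)) / ?r ^ 3 \<ge> 0" by simp
    ultimately show ?thesis by linarith
  qed
qed

lemma fin: "(Sg::real) \<le> Z \<Longrightarrow> Sg = 2*T \<Longrightarrow> T = a - P \<Longrightarrow> P \<le> b \<Longrightarrow> X = 2*(a - b) \<Longrightarrow> X \<le> Z"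
  by simp

theorem lemma2:
  fixes n :: nat
  assumes "n \<ge> 3"
  shows "(\<Sum>y\<in>{y :: bool list. length y = n - 1}. z y)
           \<ge> (2 ^ n - 2) / (real n + 1)
              * (1 + 1 / (real n - 1) - 3 / ((real n - 1) * (real n - 2)))"
proof -
  define k where "k = n - 2"
  have k1: "k \<ge> 1" and nk: "n = k + 2" using assms by (auto simp: k_def)
  let ?g = "\<lambda>S. 1 / (real (card S) + 1) - real (Pc S) / (real (card S) + 1) ^ 3"
  have f1: "(\<Sum>y\<in>{y :: bool list. length y = n - 1}. z y) \<ge> (\<Sum>y\<in>{y :: bool list. length y = n - 1}. ?g (Dset y))"
  proof (rule sum_mono)
    fix y assume "y \<in> {y :: bool list. length y = n - 1}"
    then have "y \<noteq> []" using assms by auto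
    then show "?g (Dset y) \<le> z y" by (rule z_ge)
  qed
  have f2: "(\<Sum>y\<in>{y :: bool list. length y = n - 1}. ?g (Dset y)) = 2 * (\<Sum>S\<in>Pow {..<k}. ?g S)"
  proof -
    have "n - 1 - 1 = k" by (simp add: k_def)
    then show ?thesis using sum_phi[of "n-1" ?g] assms by simp
  qed
  have f3: "(\<Sum>S\<in>Pow {..<k}. ?g S) = (2 ^ (k+1) - 1) / (real k + 1) -
        (\<Sum>S\<in>Pow {..<k}. real (Pc S) / (real (card S) + 1) ^ 3)"
    by (simp add: sum_subtractf S1)
  note f4 = S2[OF k1]
  have f5: "(2 ^ n - 2) / (real n + 1) * (1 + 1 / (real n - 1) - 3 / ((real n - 1) * (real n - 2)))
     = 2 * ((2 ^ (k+1) - 1) / (real k + 1) - (2 ^ (k+1) - 1) / (real k * (real k + 1)))"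
  proof -
    have kp: "real k > 0" using k1 by simp
    have e: "(2::real) ^ n - 2 = 2 * (2 ^ (k+1) - 1)" by (simp add: nk)
    have e2: "real n + 1 = real k + 3" "real n - 1 = real k + 1" "real n - 2 = real k" by (simp_all add: nk)
    show ?thesis unfolding e e2 by (rule alg3[OF kp])
  qed
  show ?thesis by (rule fin[OF f1 f2 f3 f4 f5])
qed

end
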